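(* A set $F$ of pairs $(K,a)$ ($K$ a graph, $a\in\mathbb{Z}_2^{*V(K)}$, taken up to isomorphism) is a full graph fibration if and only if $F(K)$ is a normal subgroup of $\mathbb{Z}_2^{*V(K)}$ for every graph $K$ and, for every injective graph homomorphism $\iota\colon H\to K$ between any two graphs, $\iota(F(H))\subset F(K)$.
   Context: Graphs are finite, undirected, without multiple edges, loops allowed, considered up to isomorphism; $N_k$ is the edgeless graph on $k$ vertices. For a set $V$, $\mathbb{Z}_2^{*V}$ is the group generated by $V$ subject to $v^2=e$; a map $\phi\colon V\to V'$ induces a homomorphism $\mathbb{Z}_2^{*V}\to\mathbb{Z}_2^{*V'}$, also denoted $\phi$. Pairs are taken up to the equivalence $(K,a)\equiv(K',\phi(a))$ for isomorphisms $\phi\colon K\to K'$, and $F(K):=\{a\mid (K,a)\in F\}$. A vertex overlap of graphs $K,H$ is a subset $f\subset V(K)\times V(H)$ in which each vertex occurs at most once; $K\cup_fH$ is the quotient of $K\sqcup H$ identifying $v$ with $w$ for $(v,w)\in f$ (an edge between two vertices of the quotient iff there is one between some representatives); $f_K,f_H$ are the induced maps into $V(K\cup_fH)$. A graph fibration is such a set $F$ with $(N_0,e),(N_1,e)\in F$ and: (F1) each $F(K)$ is empty or a normal subgroup; (F2) $\phi(F(K))=F(K)$ for every automorphism $\phi$ of $K$; (F3) if $(K,a),(H,b)\in F$ and $f$ is a vertex overlap of $K,H$, then $(K\cup_fH,f_K(a)f_H(b))\in F$. It is full if $F(K)\ne\emptyset$ for every graph $K$. *)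

theory Defs
  imports "HOL-Algebra.Coset"
begin

text \<open>Finite undirected graphs with loops allowed, no multiple edges. Vertices are natural
numbers (every finite graph is isomorphic to one of these); an edge is a set of one (loop)
or two vertices.\<close>

record graph =
  verts :: "nat set"
  edges :: "nat set set"

definition wf_graph :: "graph \<Rightarrow> bool" where
  "wf_graph G \<longleftrightarrow> finite (verts G) \<and>
     (\<forall>e\<in>edges G. e \<subseteq> verts G \<and> (card e = 1 \<or> card e = 2))"

definition N0 :: graph where "N0 = \<lparr>verts = {}, edges = {}\<rparr>"
definition N1 :: graph where "N1 = \<lparr>verts = {0}, edges = {}\<rparr>"

definition graph_iso :: "(nat \<Rightarrow> nat) \<Rightarrow> graph \<Rightarrow> graph \<Rightarrow> bool" where
  "graph_iso \<phi> K K' \<longleftrightarrow> bij_betw \<phi> (verts K) (verts K') \<and> edges K' = (\<lambda>e. \<phi> ` e) ` edges K"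

definition inj_graph_hom :: "(nat \<Rightarrow> nat) \<Rightarrow> graph \<Rightarrow> graph \<Rightarrow> bool" where
  "inj_graph_hom \<iota> H K \<longleftrightarrow> inj_on \<iota> (verts H) \<and> \<iota> ` verts H \<subseteq> verts K \<and>
     (\<forall>e\<in>edges H. \<iota> ` e \<in> edges K)"

fun red_cons :: "nat \<Rightarrow> nat list \<Rightarrow> nat list" where
  "red_cons x [] = [x]"
| "red_cons x (y # ys) = (if x = y then ys else x # y # ys)"

definition red :: "nat list \<Rightarrow> nat list" where
  "red xs = foldr red_cons xs []"

definition Z2free :: "nat set \<Rightarrow> nat list monoid" where
  "Z2free V = \<lparr>carrier = {a. set a \<subseteq> V \<and> successively (\<noteq>) a},
               mult = (\<lambda>a b. red (a @ b)), one = []\<rparr>"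

definition zhom :: "(nat \<Rightarrow> nat) \<Rightarrow> nat list \<Rightarrow> nat list" where
  "zhom \<phi> a = red (map \<phi> a)"

definition fiber :: "(graph \<times> nat list) set \<Rightarrow> graph \<Rightarrow> nat list set" where
  "fiber F K = {a. (K, a) \<in> F}"

text \<open>F is a set of pairs (K,a), a in Z_2^{*V(K)}, taken up to isomorphism: modelled as
an isomorphism-closed set of concrete pairs.\<close>
definition pair_set :: "(graph \<times> nat list) set \<Rightarrow> bool" where
  "pair_set F \<longleftrightarrow> (\<forall>(K, a)\<in>F. wf_graph K \<and> a \<in> carrier (Z2free (verts K))) \<and>
     (\<forall>K K' \<phi> a. (K, a) \<in> F \<and> wf_graph K' \<and> graph_iso \<phi> K K' \<longrightarrow> (K', zhom \<phi> a) \<in> F)"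

definition vertex_overlap :: "(nat \<times> nat) set \<Rightarrow> graph \<Rightarrow> graph \<Rightarrow> bool" where
  "vertex_overlap f K H \<longleftrightarrow> f \<subseteq> verts K \<times> verts H \<and>
     (\<forall>(v, w)\<in>f. \<forall>(v', w')\<in>f. v = v' \<longleftrightarrow> w = w')"

text \<open>G together with gK, gH is (a representative of) the glued graph K \<union>_f H with the
induced maps f_K = gK, f_H = gH.\<close>
definition glue_rep :: "(nat \<times> nat) set \<Rightarrow> graph \<Rightarrow> graph \<Rightarrow> graph \<Rightarrow> (nat \<Rightarrow> nat) \<Rightarrow> (nat \<Rightarrow> nat) \<Rightarrow> bool" where
  "glue_rep f K H G gK gH \<longleftrightarrow> wf_graph G \<and>
     inj_on gK (verts K) \<and> inj_on gH (verts H) \<and>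
     verts G = gK ` verts K \<union> gH ` verts H \<and>
     (\<forall>v\<in>verts K. \<forall>w\<in>verts H. gK v = gH w \<longleftrightarrow> (v, w) \<in> f) \<and>
     edges G = (\<lambda>e. gK ` e) ` edges K \<union> (\<lambda>e. gH ` e) ` edges H"

definition graph_fibration :: "(graph \<times> nat list) set \<Rightarrow> bool" where
  "graph_fibration F \<longleftrightarrow>
     (N0, []) \<in> F \<and> (N1, []) \<in> F \<and>
     (\<forall>K. wf_graph K \<longrightarrow> fiber F K = {} \<or> fiber F K \<lhd> Z2free (verts K)) \<and>
     (\<forall>K \<phi>. wf_graph K \<and> graph_iso \<phi> K K \<longrightarrow> zhom \<phi> ` fiber F K = fiber F K) \<and>
     (\<forall>K H a b f G gK gH. (K, a) \<in> F \<and> (H, b) \<in> F \<and> vertex_overlap f K H \<and>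
        glue_rep f K H G gK gH \<longrightarrow>
        (G, zhom gK a \<otimes>\<^bsub>Z2free (verts G)\<^esub> zhom gH b) \<in> F)"

definition full_graph_fibration :: "(graph \<times> nat list) set \<Rightarrow> bool" where
  "full_graph_fibration F \<longleftrightarrow> graph_fibration F \<and> (\<forall>K. wf_graph K \<longrightarrow> fiber F K \<noteq> {})"

end

theory Submission
  imports Defs
begin

lemma red_Cons: "red (x # xs) = red_cons x (red xs)"
  by (simp add: red_def)

lemma red_cons_reduced:
  "successively (\<noteq>) ys \<Longrightarrow> successively (\<noteq>) (red_cons x ys)"
  by (cases ys) (auto simp: successively_Cons)

lemma red_reduced: "successively (\<noteq>) (red xs)"
  by (induction xs) (auto simp: red_Cons red_def red_cons_reduced)

lemma set_red_cons: "set (red_cons x ys) \<subseteq> insert x (set ys)"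
  by (cases ys) auto

lemma set_red: "set (red xs) \<subseteq> set xs"
proof (induction xs)
  case Nil then show ?case by (simp add: red_def)
next
  case (Cons x xs) then show ?case using set_red_cons[of x "red xs"] by (auto simp: red_Cons)
qed

lemma red_id: "successively (\<noteq>) xs \<Longrightarrow> red xs = xs"
proof (induction xs)
  case Nil then show ?case by (simp add: red_def)
next
  case (Cons x xs)
  then have "successively (\<noteq>) xs" by (cases xs) auto
  with Cons have "red xs = xs" by simp
  with Cons.prems show ?case by (cases xs) (auto simp: red_Cons)
qed

lemma red_cons_twice: "successively (\<noteq>) w \<Longrightarrow> red_cons x (red_cons x w) = w"
proof (cases w)
  case (Cons y w')
  assume s: "successively (\<noteq>) w"
  show ?thesis
  proof (cases "x = y")
    case True
    with s Cons have "w' = [] \<or> hd w' \<noteq> x" by (cases w') auto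
    then show ?thesis using Cons True by (cases w') auto
  qed (use Cons in auto)
qed auto

lemma red_map_red_cons:
  "red (map \<phi> (red_cons x zs)) = red_cons (\<phi> x) (red (map \<phi> zs))"
proof (cases zs)
  case Nil then show ?thesis by (simp add: red_def)
next
  case (Cons y ys)
  show ?thesis
  proof (cases "x = y")
    case True
    then show ?thesis using Cons
      by (simp add: red_Cons red_cons_twice red_reduced)
  next
    case False
    then show ?thesis using Cons by (simp add: red_Cons)
  qed
qed

lemma red_map_red: "red (map \<phi> (red xs)) = red (map \<phi> xs)"
proof (induction xs)
  case Nil then show ?case by (simp add: red_def)
next
  case (Cons x xs)
  then show ?case by (simp add: red_Cons red_map_red_cons)
qed

lemma zhom_zhom: "zhom \<phi> (zhom \<psi> a) = red (map (\<phi> \<circ> \<psi>) a)"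
  by (simp add: zhom_def red_map_red)

lemma iso_hom: "graph_iso \<phi> K K' \<Longrightarrow> inj_graph_hom \<phi> K K'"
  unfolding graph_iso_def inj_graph_hom_def bij_betw_def by auto

theorem proposition2p17:
  assumes "pair_set F"
  shows "full_graph_fibration F \<longleftrightarrow>
    (\<forall>K. wf_graph K \<longrightarrow> fiber F K \<lhd> Z2free (verts K)) \<and>
    (\<forall>H K \<iota>. wf_graph H \<and> wf_graph K \<and> inj_graph_hom \<iota> H K \<longrightarrow>
       zhom \<iota> ` fiber F H \<subseteq> fiber F K)"
proof
  assume full: "full_graph_fibration F"
  have nrm: "\<forall>K. wf_graph K \<longrightarrow> fiber F K \<lhd> Z2free (verts K)"
  proof (intro allI impI)
    fix K assume K: "wf_graph K"
    have "fiber F K = {} \<or> fiber F K \<lhd> Z2free (verts K)"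
      using full K unfolding full_graph_fibration_def graph_fibration_def by blast
    moreover have "fiber F K \<noteq> {}"
      using full K unfolding full_graph_fibration_def by blast
    ultimately show "fiber F K \<lhd> Z2free (verts K)" by blast
  qed
  show "(\<forall>K. wf_graph K \<longrightarrow> fiber F K \<lhd> Z2free (verts K)) \<and>
    (\<forall>H K \<iota>. wf_graph H \<and> wf_graph K \<and> inj_graph_hom \<iota> H K \<longrightarrow>
       zhom \<iota> ` fiber F H \<subseteq> fiber F K)"
  proof (intro conjI allI impI subsetI)
    fix K assume "wf_graph K" then show "fiber F K \<lhd> Z2free (verts K)" using nrm by blast
  next
    fix H K \<iota> c
    assume h: "wf_graph H \<and> wf_graph K \<and> inj_graph_hom \<iota> H K" and c: "c \<in> zhom \<iota> ` fiber F H"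
    then obtain a where a: "(H, a) \<in> F" and ca: "c = zhom \<iota> a" by (auto simp: fiber_def)
    have "subgroup (fiber F K) (Z2free (verts K))" using nrm h normal_imp_subgroup by blast
    then have "one (Z2free (verts K)) \<in> fiber F K" by (rule subgroup.one_closed)
    then have b: "(K, []) \<in> F" by (simp add: Z2free_def fiber_def)
    define f where "f = {(v, \<iota> v) | v. v \<in> verts H}"
    have vo: "vertex_overlap f H K"
      using h unfolding vertex_overlap_def f_def inj_graph_hom_def inj_on_def by auto
    have gr: "glue_rep f H K K \<iota> id"
    proof -
      have "edges K = (\<lambda>e. \<iota> ` e) ` edges H \<union> (\<lambda>e. id ` e) ` edges K"
        using h unfolding inj_graph_hom_def by auto
      moreover have "verts K = \<iota> ` verts H \<union> id ` verts K"
        using h unfolding inj_graph_hom_def by auto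
      ultimately show ?thesis using h unfolding glue_rep_def f_def inj_graph_hom_def by auto
    qed
    have "(K, zhom \<iota> a \<otimes>\<^bsub>Z2free (verts K)\<^esub> zhom id []) \<in> F"
    proof -
      have F3: "\<forall>K H a b f G gK gH. (K, a) \<in> F \<and> (H, b) \<in> F \<and> vertex_overlap f K H \<and>
        glue_rep f K H G gK gH \<longrightarrow>
        (G, zhom gK a \<otimes>\<^bsub>Z2free (verts G)\<^esub> zhom gH b) \<in> F"
        using full unfolding full_graph_fibration_def graph_fibration_def by (elim conjE)
      show ?thesis using F3[rule_format, OF conjI[OF a conjI[OF b conjI[OF vo gr]]]] .
    qed
    moreover have "zhom \<iota> a \<otimes>\<^bsub>Z2free (verts K)\<^esub> zhom id [] = zhom \<iota> a"
      by (simp add: Z2free_def zhom_def red_def[of "[]"] red_id red_reduced)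
    ultimately show "c \<in> fiber F K" using ca by (simp add: fiber_def)
  qed
next
  assume R: "(\<forall>K. wf_graph K \<longrightarrow> fiber F K \<lhd> Z2free (verts K)) \<and>
    (\<forall>H K \<iota>. wf_graph H \<and> wf_graph K \<and> inj_graph_hom \<iota> H K \<longrightarrow>
       zhom \<iota> ` fiber F H \<subseteq> fiber F K)"
  have sg: "subgroup (fiber F K) (Z2free (verts K))" if "wf_graph K" for K
    using R that normal_imp_subgroup by blast
  have one: "(K, []) \<in> F" if "wf_graph K" for K
    using subgroup.one_closed[OF sg[OF that]] by (simp add: Z2free_def fiber_def)
  have hom: "(K, zhom \<iota> a) \<in> F" if "(H, a) \<in> F" "wf_graph H" "wf_graph K" "inj_graph_hom \<iota> H K"
    for H K \<iota> a
  proof -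
    have "zhom \<iota> ` fiber F H \<subseteq> fiber F K" using R that(2-4) by blast
    then show ?thesis using that(1) by (auto simp: fiber_def)
  qed
  have wfF: "wf_graph K" if "(K, a) \<in> F" for K a
    using assms that unfolding pair_set_def by blast
  have carF: "a \<in> carrier (Z2free (verts K))" if "(K, a) \<in> F" for K a
    using assms that unfolding pair_set_def by blast
  have "wf_graph N0" "wf_graph N1" by (auto simp: wf_graph_def N0_def N1_def)
  note N = one[OF this(1)] one[OF this(2)]
  have F2: "zhom \<phi> ` fiber F K = fiber F K" if K: "wf_graph K" and iso: "graph_iso \<phi> K K" for K \<phi>
  proof
    show "zhom \<phi> ` fiber F K \<subseteq> fiber F K" using R K iso_hom[OF iso] by blast
  next
    define \<psi> where "\<psi> = inv_into (verts K) \<phi>"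
    have bij: "bij_betw \<phi> (verts K) (verts K)" and E: "edges K = (\<lambda>e. \<phi> ` e) ` edges K"
      using iso by (auto simp: graph_iso_def)
    have bij2: "bij_betw \<psi> (verts K) (verts K)" unfolding \<psi>_def by (rule bij_betw_inv_into[OF bij])
    have inv1: "\<psi> (\<phi> x) = x" if "x \<in> verts K" for x
      using bij that unfolding \<psi>_def bij_betw_def by (simp add: inv_into_f_f)
    have inv2: "\<phi> (\<psi> x) = x" if "x \<in> verts K" for x
      using bij that unfolding \<psi>_def bij_betw_def by (simp add: f_inv_into_f)
    have esub: "e \<subseteq> verts K" if "e \<in> edges K" for e using K that by (auto simp: wf_graph_def)
    have "(\<lambda>e. \<psi> ` e) ` edges K = (\<lambda>e. \<psi> ` e) ` (\<lambda>e. \<phi> ` e) ` edges K" using E by simp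
    also have "\<dots> = edges K"
    proof -
      have "\<psi> ` \<phi> ` e = e" if "e \<in> edges K" for e
        using esub[OF that] inv1 by (force simp: image_image)
      then show ?thesis by (force simp: image_image)
    qed
    finally have iso2: "graph_iso \<psi> K K" using bij2 by (simp add: graph_iso_def)
    show "fiber F K \<subseteq> zhom \<phi> ` fiber F K"
    proof
      fix a assume a: "a \<in> fiber F K"
      then have b: "zhom \<psi> a \<in> fiber F K" using R K iso_hom[OF iso2] by blast
      have ca: "a \<in> carrier (Z2free (verts K))" using carF a by (simp add: fiber_def)
      have "map (\<phi> \<circ> \<psi>) a = a" using ca inv2 by (simp add: Z2free_def map_idI subset_iff)
      then have "zhom \<phi> (zhom \<psi> a) = a" using ca
        by (simp add: zhom_zhom red_id Z2free_def)
      then show "a \<in> zhom \<phi> ` fiber F K" using b by (metis image_eqI)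
    qed
  qed
  have F3: "(G, zhom gK a \<otimes>\<^bsub>Z2free (verts G)\<^esub> zhom gH b) \<in> F"
    if a: "(K, a) \<in> F" and b: "(H, b) \<in> F" and g: "glue_rep f K H G gK gH" for K H a b f G gK gH
  proof -
    have wG: "wf_graph G" using g by (simp add: glue_rep_def)
    have h1: "inj_graph_hom gK K G" using g unfolding glue_rep_def inj_graph_hom_def by auto
    have h2: "inj_graph_hom gH H G" using g unfolding glue_rep_def inj_graph_hom_def by auto
    have "zhom gK a \<in> fiber F G" using hom[OF a wfF[OF a] wG h1] by (simp add: fiber_def)
    moreover have "zhom gH b \<in> fiber F G" using hom[OF b wfF[OF b] wG h2] by (simp add: fiber_def)
    ultimately have "zhom gK a \<otimes>\<^bsub>Z2free (verts G)\<^esub> zhom gH b \<in> fiber F G"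
      using subgroup.m_closed[OF sg[OF wG]] by blast
    then show ?thesis by (simp add: fiber_def)
  qed
  show "full_graph_fibration F"
    unfolding full_graph_fibration_def graph_fibration_def
  proof (intro conjI allI impI)
    show "(N0, []) \<in> F" "(N1, []) \<in> F" using N by auto
  next
    fix K assume "wf_graph K"
    then show "fiber F K = {} \<or> fiber F K \<lhd> Z2free (verts K)" using R by blast
  next
    fix K \<phi> assume "wf_graph K \<and> graph_iso \<phi> K K"
    then show "zhom \<phi> ` fiber F K = fiber F K" using F2 by blast
  next
    fix K H a b f G gK gH
    assume "(K, a) \<in> F \<and> (H, b) \<in> F \<and> vertex_overlap f K H \<and> glue_rep f K H G gK gH"
    then show "(G, zhom gK a \<otimes>\<^bsub>Z2free (verts G)\<^esub> zhom gH b) \<in> F" using F3 by blast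
  next
    fix K assume "wf_graph K"
    then have "[] \<in> fiber F K" using one by (simp add: fiber_def)
    then show "fiber F K \<noteq> {}" by blast
  qed
qed

end
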